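(* Let $R$ be a commutative ring with identity. Then $R$ satisfies Property $D$ if and only if the polynomial ring $R[x]$ satisfies Property $D$.
   Context: A ring $A$ satisfies Property $D$ if $A\setminus\mathfrak{N}(A)=\mathrm{reg}(A)$, where $\mathfrak{N}(A)$ is the nilradical and $\mathrm{reg}(A)$ the set of regular elements (non-zero-divisors). *)

theory Defs
  imports "HOL-Computational_Algebra.Polynomial"
begin

definition nilradical :: "'a::comm_ring_1 set" where
  "nilradical = {a. \<exists>n::nat. a ^ n = 0}"

definition regular_elements :: "'a::comm_ring_1 set" where
  "regular_elements = {a. \<forall>b. a * b = 0 \<longrightarrow> b = 0}"

definition property_D :: "'a::comm_ring_1 itself \<Rightarrow> bool" where
  "property_D TYPE('a) \<longleftrightarrow> (UNIV :: 'a set) - nilradical = regular_elements"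

end

theory Submission
  imports Defs
begin

lemma nil_add:
  fixes a b :: "'a::comm_ring_1"
  assumes "a ^ m = 0" "b ^ l = 0"
  shows "(a + b) ^ (m + l) = 0"
proof -
  have "(a + b) ^ (m + l) = (\<Sum>k\<le>m+l. of_nat ((m+l) choose k) * a ^ k * b ^ (m + l - k))"
    by (simp add: binomial_ring)
  also have "\<dots> = 0"
  proof (rule sum.neutral, rule ballI)
    fix k assume "k \<in> {..m+l}"
    show "of_nat ((m+l) choose k) * a ^ k * b ^ (m + l - k) = 0"
    proof (cases "k \<ge> m")
      case True
      then have "a ^ k = a ^ m * a ^ (k - m)" by (simp add: power_add[symmetric])
      then show ?thesis using assms by simp
    next
      case False
      then have "m + l - k = l + (m - k)" by simp
      then have "b ^ (m + l - k) = b ^ l * b ^ (m - k)"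
        by (simp add: power_add)
      then show ?thesis using assms by simp
    qed
  qed
  finally show ?thesis .
qed

lemma nil_mult:
  fixes a c :: "'a::comm_ring_1"
  assumes "a ^ m = 0"
  shows "(a * c) ^ m = 0"
  using assms by (simp add: power_mult_distrib)

lemma reg_pow:
  fixes r :: "'a::comm_ring_1"
  assumes "\<forall>b. r * b = 0 \<longrightarrow> b = 0"
  shows "\<forall>b. r ^ k * b = 0 \<longrightarrow> b = 0"
proof (induction k)
  case 0 then show ?case by simp
next
  case (Suc k)
  show ?case
  proof (intro allI impI)
    fix b assume "r ^ Suc k * b = 0"
    then have "r * (r ^ k * b) = 0" by (simp add: mult.assoc)
    then have "r ^ k * b = 0" using assms by blast
    then show "b = 0" using Suc by blast
  qed
qed

lemma reg_add_nil:
  fixes r n :: "'a::comm_ring_1"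
  assumes r: "\<forall>b. r * b = 0 \<longrightarrow> b = 0" and n: "n ^ m = 0"
  shows "\<forall>b. (r + n) * b = 0 \<longrightarrow> b = 0"
proof (intro allI impI)
  fix b assume "(r + n) * b = 0"
  then have rb: "r * b = - n * b" by (simp add: algebra_simps add_eq_0_iff)
  have "r ^ k * b = (- n) ^ k * b" for k
  proof (induction k)
    case 0 then show ?case by simp
  next
    case (Suc k)
    have "r ^ Suc k * b = r ^ k * (r * b)" by (simp add: algebra_simps)
    also have "\<dots> = - n * (r ^ k * b)" using rb by (simp add: algebra_simps)
    also have "\<dots> = (- n) ^ Suc k * b" using Suc by (simp add: algebra_simps)
    finally show ?case .
  qed
  then have "r ^ m * b = 0" using n by (simp add: power_minus')
  then show "b = 0" using reg_pow[OF r] by blast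
qed

lemma propD_iff:
  "property_D TYPE('a::comm_ring_1) \<longleftrightarrow>
     ((0::'a) \<noteq> 1 \<and> (\<forall>a::'a. (\<forall>n. a ^ n \<noteq> 0) \<longrightarrow> (\<forall>b. a * b = 0 \<longrightarrow> b = 0)))"
proof
  assume D: "property_D TYPE('a)"
  then have eq: "(UNIV :: 'a set) - nilradical = regular_elements" by (simp add: property_D_def)
  have "(0::'a) \<in> nilradical" unfolding nilradical_def
    using power_one_right[of "0::'a"] by blast
  then have "(0::'a) \<notin> regular_elements" using eq by blast
  then have "(0::'a) \<noteq> 1" unfolding regular_elements_def by auto
  moreover have "\<forall>a::'a. (\<forall>n. a ^ n \<noteq> 0) \<longrightarrow> (\<forall>b. a * b = 0 \<longrightarrow> b = 0)"
  proof (intro allI impI)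
    fix a b :: 'a assume "\<forall>n. a ^ n \<noteq> 0" "a * b = 0"
    then have "a \<in> UNIV - nilradical" unfolding nilradical_def by simp
    then have "a \<in> regular_elements" using eq by simp
    then show "b = 0" using \<open>a * b = 0\<close> unfolding regular_elements_def by simp
  qed
  ultimately show "(0::'a) \<noteq> 1 \<and> (\<forall>a::'a. (\<forall>n. a ^ n \<noteq> 0) \<longrightarrow> (\<forall>b. a * b = 0 \<longrightarrow> b = 0))" by blast
next
  assume H: "(0::'a) \<noteq> 1 \<and> (\<forall>a::'a. (\<forall>n. a ^ n \<noteq> 0) \<longrightarrow> (\<forall>b. a * b = 0 \<longrightarrow> b = 0))"
  have nr: "a \<notin> regular_elements" if "a ^ n = 0" for a :: 'a and n
  proof
    assume "a \<in> regular_elements"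
    then have "\<forall>b. a * b = 0 \<longrightarrow> b = 0" unfolding regular_elements_def by simp
    then have "\<forall>b. a ^ n * b = 0 \<longrightarrow> b = 0" by (rule reg_pow)
    then have "(1::'a) = 0" using that by simp
    then show False using H by simp
  qed
  have "(UNIV :: 'a set) - nilradical = regular_elements"
  proof (intro set_eqI iffI)
    fix a :: 'a assume "a \<in> UNIV - nilradical"
    then have "\<forall>n. a ^ n \<noteq> 0" unfolding nilradical_def by simp
    then show "a \<in> regular_elements" using H unfolding regular_elements_def by blast
  next
    fix a :: 'a assume "a \<in> regular_elements"
    then show "a \<in> UNIV - nilradical" using nr unfolding nilradical_def by blast
  qed
  then show "property_D TYPE('a)" by (simp add: property_D_def)
qed

lemma reg_const_term:
  fixes f :: "'a::comm_ring_1 poly"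
  assumes r: "\<forall>b. coeff f 0 * b = 0 \<longrightarrow> b = 0"
  shows "\<forall>g. f * g = 0 \<longrightarrow> g = 0"
proof (intro allI impI)
  fix g assume "f * g = 0"
  then show "g = 0"
  proof (induction g)
    case 0 then show ?case by simp
  next
    case (pCons b q)
    have "coeff (f * pCons b q) 0 = 0" using pCons.prems by simp
    then have "coeff f 0 * b = 0" by (simp add: coeff_mult_0 mult.commute)
    then have b0: "b = 0" using r by blast
    then have "pCons 0 (f * q) = 0" using pCons.prems by simp
    then have "q = 0" using pCons.IH by simp
    then show ?case using b0 by simp
  qed
qed

lemma const_pow: "[:a:] ^ n = [:a ^ n:]"
  by (induction n) (auto simp: algebra_simps)

lemma poly_nontriv: "((0::'a::comm_ring_1 poly) \<noteq> 1) \<longleftrightarrow> ((0::'a) \<noteq> 1)"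
  by (simp add: one_pCons)

theorem mainTheorem14:
  shows "property_D TYPE('a::comm_ring_1) \<longleftrightarrow> property_D TYPE('a poly)"
proof
  assume "property_D TYPE('a poly)"
  then have H: "(0::'a poly) \<noteq> 1" and
    R: "\<And>f::'a poly. (\<forall>n. f ^ n \<noteq> 0) \<Longrightarrow> (\<forall>g. f * g = 0 \<longrightarrow> g = 0)"
    using propD_iff by blast+
  show "property_D TYPE('a)"
    unfolding propD_iff
  proof (intro conjI allI impI)
    show "(0::'a) \<noteq> 1" using H poly_nontriv by blast
  next
    fix a b :: 'a assume a: "\<forall>n. a ^ n \<noteq> 0" and ab: "a * b = 0"
    have "\<forall>n. [:a:] ^ n \<noteq> 0" using a by (simp add: const_pow)
    then have "\<forall>g. [:a:] * g = 0 \<longrightarrow> g = 0" using R by blast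
    moreover have "[:a:] * [:b:] = 0" using ab by (simp add: mult.commute)
    ultimately have "[:b:] = 0" by blast
    then show "b = 0" by simp
  qed
next
  assume "property_D TYPE('a)"
  then have H: "(0::'a) \<noteq> 1" and
    R: "\<And>a::'a. (\<forall>n. a ^ n \<noteq> 0) \<Longrightarrow> (\<forall>b. a * b = 0 \<longrightarrow> b = 0)"
    using propD_iff by blast+
  have main: "(\<forall>n. f ^ n \<noteq> 0) \<longrightarrow> (\<forall>g. f * g = 0 \<longrightarrow> g = 0)" for f :: "'a poly"
  proof (induction f)
    case 0 then show ?case using power_one_right[of "0::'a poly"] by blast
  next
    case (pCons a p)
    show ?case
    proof (intro impI)
      assume nn: "\<forall>n. pCons a p ^ n \<noteq> 0"
      show "\<forall>g. pCons a p * g = 0 \<longrightarrow> g = 0"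
      proof (cases "\<exists>m. a ^ m = 0")
        case False
        then have "\<forall>n. a ^ n \<noteq> 0" by blast
        then have "\<forall>b. a * b = 0 \<longrightarrow> b = 0" by (rule R)
        then have "\<forall>b. coeff (pCons a p) 0 * b = 0 \<longrightarrow> b = 0" by simp
        then show ?thesis using reg_const_term by blast
      next
        case True
        then obtain m where m: "a ^ m = 0" by blast
        have pe: "pCons a p = pCons 0 p + [:a:]" by simp
        have cm: "[:a:] ^ m = 0" using m by (simp add: const_pow)
        have "\<forall>n. p ^ n \<noteq> 0"
        proof
          fix n show "p ^ n \<noteq> 0"
          proof
            assume "p ^ n = 0"
            then have "(p * [:0, 1:]) ^ n = 0" by (rule nil_mult)
            moreover have E: "p * [:0, 1:] = pCons 0 p" by simp
            ultimately have "pCons 0 p ^ n = 0" by (simp only: E)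
            then have "(pCons 0 p + [:a:]) ^ (n + m) = 0" using cm by (rule nil_add)
            then have "pCons a p ^ (n + m) = 0" unfolding pe[symmetric] .
            then show False using nn by blast
          qed
        qed
        then have rp: "\<forall>g. p * g = 0 \<longrightarrow> g = 0" using pCons.IH by (rule mp[rotated])
        have "\<forall>g. pCons 0 p * g = 0 \<longrightarrow> g = 0"
        proof (intro allI impI)
          fix g assume "pCons 0 p * g = 0"
          then have "pCons 0 (p * g) = 0" by simp
          then show "g = 0" using rp by simp
        qed
        then have "\<forall>g. (pCons 0 p + [:a:]) * g = 0 \<longrightarrow> g = 0" using cm by (rule reg_add_nil)
        then show ?thesis unfolding pe[symmetric] .
      qed
    qed
  qed
  show "property_D TYPE('a poly)"
    unfolding propD_iff
  proof (intro conjI allI impI)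
    show "(0::'a poly) \<noteq> 1" using H by (simp add: poly_nontriv)
  next
    fix f g :: "'a poly" assume "\<forall>n. f ^ n \<noteq> 0" "f * g = 0"
    then show "g = 0" using main[of f] by blast
  qed
qed

end
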